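(* Let $n\ge 1$ and let $T\in\mathbb{C}^n\otimes\mathbb{C}^n\otimes\mathbb{C}^n$ have slice rank strictly less than $n$. Then $T$ lies in the nullcone of the action of $G=\mathrm{SL}_n\times\mathrm{SL}_n\times\mathrm{SL}_n$; that is, every homogeneous $G$-invariant polynomial of positive degree on $\mathbb{C}^n\otimes\mathbb{C}^n\otimes\mathbb{C}^n$ vanishes at $T$. *)

theory Defs
  imports "HOL-Analysis.Analysis"
begin

text \<open>Tensors in C^n (x) C^n (x) C^n, with n = CARD('n), as functions of three indices.\<close>
type_synonym 'n tensor3 = "'n \<Rightarrow> 'n \<Rightarrow> 'n \<Rightarrow> complex"

datatype slice_dir = Slice1 | Slice2 | Slice3

fun slice_tensor :: "slice_dir \<Rightarrow> ('n \<Rightarrow> complex) \<Rightarrow> ('n \<Rightarrow> 'n \<Rightarrow> complex) \<Rightarrow> 'n tensor3" where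
  "slice_tensor Slice1 u M = (\<lambda>i j k. u i * M j k)"
| "slice_tensor Slice2 u M = (\<lambda>i j k. u j * M i k)"
| "slice_tensor Slice3 u M = (\<lambda>i j k. u k * M i j)"

definition has_slice_decomp :: "'n tensor3 \<Rightarrow> nat \<Rightarrow> bool" where
  "has_slice_decomp T r \<longleftrightarrow>
     (\<exists>dir u M. T = (\<lambda>i j k. \<Sum>s<r. slice_tensor (dir s) (u s) (M s) i j k))"

definition slice_rank :: "'n tensor3 \<Rightarrow> nat" where
  "slice_rank T = (LEAST r. has_slice_decomp T r)"

definition tensor_act ::
  "complex^'n^'n \<Rightarrow> complex^'n^'n \<Rightarrow> complex^'n^'n \<Rightarrow> ('n::finite) tensor3 \<Rightarrow> 'n tensor3" where
  "tensor_act A B C T = (\<lambda>i j k. \<Sum>a\<in>UNIV. \<Sum>b\<in>UNIV. \<Sum>c\<in>UNIV.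
       A$i$a * B$j$b * C$k$c * T a b c)"

text \<open>Homogeneous polynomial functions of degree d in the n^3 coordinates T(i,j,k):
  linear combinations of degree-d monomials (indexed by lists of d coordinate positions).\<close>
definition homogeneous_poly_fun :: "nat \<Rightarrow> (('n::finite) tensor3 \<Rightarrow> complex) \<Rightarrow> bool" where
  "homogeneous_poly_fun d P \<longleftrightarrow>
     (\<exists>c :: ('n \<times> 'n \<times> 'n) list \<Rightarrow> complex.
        \<forall>T. P T = (\<Sum>xs\<in>{xs. length xs = d}.
                      c xs * (\<Prod>p\<leftarrow>xs. T (fst p) (fst (snd p)) (snd (snd p)))))"

definition SL3_invariant :: "(('n::finite) tensor3 \<Rightarrow> complex) \<Rightarrow> bool" where
  "SL3_invariant P \<longleftrightarrow>
     (\<forall>A B C :: complex^'n^'n. det A = 1 \<and> det B = 1 \<and> det C = 1 \<longrightarrow>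
        (\<forall>T. P (tensor_act A B C T) = P T))"

definition in_nullcone :: "('n::finite) tensor3 \<Rightarrow> bool" where
  "in_nullcone T \<longleftrightarrow>
     (\<forall>d P. d > 0 \<and> homogeneous_poly_fun d P \<and> SL3_invariant P \<longrightarrow> P T = 0)"

end

theory Submission
  imports Defs
begin

lemma factor_basis:
  fixes V :: "(complex^'n::finite) set"
  assumes "finite V"
  shows "\<exists>(G::complex^'n^'n) (F::complex^'n^'n) S. G ** F = mat 1 \<and> F ** G = mat 1 \<and> card S \<le> card V \<and>
            (\<forall>v\<in>V. \<forall>i. i \<notin> S \<longrightarrow> (F *v v)$i = 0)"
proof -
  obtain B1 where B1: "B1 \<subseteq> V" "vec.independent B1" "V \<subseteq> vec.span B1"
    by (rule vec.maximal_independent_subset)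
  define B where "B = vec.extend_basis B1"
  have B: "B1 \<subseteq> B" "vec.independent B" "vec.span B = UNIV"
    using B1(2) unfolding B_def
    by (auto simp: vec.extend_basis_superset vec.independent_extend_basis)
  obtain g where g: "Vector_Spaces.linear (*s) (*s) g" "bij g" "bij_betw g B (cart_basis :: (complex^'n) set)"
    using vec.basis_change_exists'[OF B(2) independent_cart_basis B(3) span_cart_basis] by auto
  obtain g' where g': "Vector_Spaces.linear (*s) (*s) g'" "\<forall>x. g' (g x) = x" "\<forall>x. g (g' x) = x"
    using vec.linear_injective_isomorphism[OF g(1)] g(2) bij_is_inj by auto
  define F where "F = matrix g"
  define G where "G = matrix g'"
  have FG: "F ** G = mat 1"
  proof -
    have "F ** G = matrix (g \<circ> g')" unfolding F_def G_def
      using matrix_compose_gen[OF g'(1) g(1)] by simp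
    also have "g \<circ> g' = id" using g'(3) by auto
    finally show ?thesis by (metis matrix_id_mat_1)
  qed
  have GF: "G ** F = mat 1"
  proof -
    have "G ** F = matrix (g' \<circ> g)" unfolding F_def G_def
      using matrix_compose_gen[OF g(1) g'(1)] by simp
    also have "g' \<circ> g = id" using g'(2) by auto
    finally show ?thesis by (metis matrix_id_mat_1)
  qed
  define S where "S = {i. axis i 1 \<in> g ` B1}"
  have finB1: "finite B1" using B1(1) assms finite_subset by auto
  have "card S \<le> card (g ` B1)"
  proof -
    have "(\<lambda>i. axis i (1::complex)) ` S \<subseteq> g ` B1" unfolding S_def by auto
    moreover have "inj (\<lambda>i. axis i (1::complex))" by (auto simp: inj_def axis_eq_axis)
    ultimately show ?thesis using finB1
      by (metis card_image card_mono finite_imageI inj_on_subset subset_UNIV)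
  qed
  also have "\<dots> \<le> card B1" using finB1 card_image_le by blast
  also have "\<dots> \<le> card V" using B1(1) assms card_mono by blast
  finally have cS: "card S \<le> card V" .
  define Z where "Z = {x :: complex^'n. \<forall>i. i \<notin> S \<longrightarrow> x$i = 0}"
  have subZ: "vec.subspace Z" unfolding Z_def vec.subspace_def by auto
  have gB1: "g ` B1 \<subseteq> Z"
  proof
    fix y assume y: "y \<in> g ` B1"
    then have "y \<in> cart_basis" using g(3) B(1) bij_betw_imp_surj_on by blast
    then obtain i where i: "y = axis i 1" unfolding cart_basis_def by auto
    then have "i \<in> S" using y unfolding S_def by auto
    then show "y \<in> Z" unfolding Z_def i by (auto simp: axis_def)
  qed
  have "\<forall>v\<in>V. \<forall>i. i \<notin> S \<longrightarrow> (F *v v)$i = 0"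
  proof (intro ballI allI impI)
    fix v i assume v: "v \<in> V" and i: "i \<notin> S"
    have "F *v v = g v" unfolding F_def using matrix_works[OF g(1)] by simp
    moreover have "g v \<in> vec.span (g ` B1)"
      using v B1(3) vec.linear_span_image[OF g(1)] by blast
    moreover have "vec.span (g ` B1) \<subseteq> Z" using vec.span_minimal[OF gB1 subZ] .
    ultimately show "(F *v v)$i = 0" using i unfolding Z_def by auto
  qed
  then show ?thesis using GF FG cS by (intro exI[of _ G] exI[of _ F] exI[of _ S]) auto
qed

lemma sum_if_eq:
  fixes f g :: "'n::finite \<Rightarrow> 'a::comm_ring_1"
  shows "(\<Sum>a\<in>UNIV. f a * (if a = b then g a else 0)) = f b * g b"
proof -
  have "(\<Sum>a\<in>UNIV. f a * (if a = b then g a else 0)) = (\<Sum>a\<in>UNIV. if a = b then f a * g a else 0)"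
    by (rule sum.cong) auto
  then show ?thesis by simp
qed

lemma sum_if_eq2:
  fixes f g :: "'n::finite \<Rightarrow> 'a::comm_ring_1"
  shows "(\<Sum>a\<in>UNIV. (if b = a then c else 0) * f a) = c * f b"
proof -
  have "(\<Sum>a\<in>UNIV. (if b = a then c else 0) * f a) = (\<Sum>a\<in>UNIV. if b = a then c * f a else 0)"
    by (rule sum.cong) auto
  then show ?thesis by simp
qed

lemma diag_entry:
  fixes G F :: "'a::comm_ring_1^'n::finite^'n"
  shows "(G ** (\<chi> a b. if a = b then d a else 0) ** F)$i$j = (\<Sum>a\<in>UNIV. G$i$a * d a * F$a$j)"
proof -
  have "(G ** (\<chi> a b. if a = b then d a else 0))$i$b = G$i$b * d b" for b
    by (simp add: matrix_matrix_mult_def sum_if_eq)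
  then show ?thesis by (simp add: matrix_matrix_mult_def)
qed

lemma diag_mult_vec:
  fixes w :: "'a::comm_ring_1^'n::finite"
  assumes "\<forall>i. i \<notin> S \<longrightarrow> w$i = 0"
  shows "(\<chi> a b. if a = b then (if a \<in> S then c else e) else 0) *v w = c *s w"
proof -
  have "((\<chi> a b. if a = b then (if a \<in> S then c else e) else 0) *v w)$i = (c *s w)$i" for i
    using assms by (simp add: matrix_vector_mult_def sum_if_eq2)
  then show ?thesis by (simp add: vec_eq_iff)
qed

lemma det_diag:
  fixes x :: complex
  assumes "x \<noteq> 0" "card (S::'n::finite set) = m"
  shows "det ((\<chi> a b. if a = b then (if a \<in> S then x^CARD('n)/x^m else 1/x^m) else 0) :: complex^'n^'n) = 1"
proof -
  let ?n = "CARD('n)"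
  have "det ((\<chi> a b. if a = b then (if a \<in> S then x^CARD('n)/x^m else 1/x^m) else 0) :: complex^'n^'n)
     = (\<Prod>a\<in>UNIV. if a \<in> S then x^?n/x^m else 1/x^m)"
    by (subst det_diagonal) auto
  also have "\<dots> = (x^?n/x^m)^m * (1/x^m)^(?n - m)"
  proof -
    have "card (UNIV - S) = ?n - m" using assms(2) by (simp add: card_Diff_subset)
    then show ?thesis using assms(2) by (simp add: prod.If_cases Int_absorb1 Compl_eq_Diff_UNIV)
  qed
  also have "\<dots> = 1"
  proof -
    have mn: "m \<le> ?n" using assms(2) card_mono[of UNIV S] by simp
    have "(x^?n/x^m)^m * (1/x^m)^(?n - m) = x^(?n*m) / (x^(m*m) * x^(m*(?n-m)))"
      by (simp add: power_divide power_mult[symmetric] mult.commute)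
    also have "x^(m*m) * x^(m*(?n-m)) = x^(?n*m)"
    proof -
      have "m*m + m*(?n-m) = ?n*m" using mn by (simp add: diff_mult_distrib2 mult.commute)
      then show ?thesis by (metis power_add)
    qed
    finally show ?thesis using assms(1) by simp
  qed
  finally show ?thesis .
qed


lemma factor_family:
  fixes V :: "(complex^'n::finite) set"
  assumes "finite V"
  shows "\<exists>m K (Af :: complex \<Rightarrow> complex^'n^'n). m \<le> card V \<and> 0 \<le> K \<and>
     (\<forall>x. x \<noteq> 0 \<longrightarrow> det (Af x) = 1 \<and> (\<forall>v\<in>V. Af x *v v = (x^CARD('n)/x^m) *s v) \<and>
        (norm x \<le> 1 \<longrightarrow> (\<forall>i j. norm (Af x $i$j) \<le> K / norm x ^ m)))"
proof -
  obtain G F :: "complex^'n^'n" and S where GF: "G ** F = mat 1" "F ** G = mat 1" "card S \<le> card V"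
     "\<forall>v\<in>V. \<forall>i. i \<notin> S \<longrightarrow> (F *v v)$i = 0"
    using factor_basis[OF assms] by blast
  define m where "m = card S"
  let ?n = "CARD('n)"
  define \<delta> where "\<delta> x a = (if a \<in> S then x^?n/x^m else 1/x^m)" for x :: complex and a
  define D where "D x = (\<chi> a b. if a = b then \<delta> x a else 0 :: complex^'n^'n)" for x
  define K where "K = (\<Sum>i\<in>UNIV. \<Sum>j\<in>UNIV. \<Sum>a\<in>UNIV. norm (G$i$a) * norm (F$a$j))"
  define Af where "Af x = G ** D x ** F" for x
  have K0: "0 \<le> K" unfolding K_def by (intro sum_nonneg) auto
  have "\<forall>x. x \<noteq> 0 \<longrightarrow> det (Af x) = 1 \<and> (\<forall>v\<in>V. Af x *v v = (x^?n/x^m) *s v) \<and>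
        (norm x \<le> 1 \<longrightarrow> (\<forall>i j. norm (Af x $i$j) \<le> K / norm x ^ m))"
  proof (intro allI impI conjI)
    fix x :: complex assume x: "x \<noteq> 0"
    have "det (D x) = 1" unfolding D_def \<delta>_def using det_diag[OF x m_def[symmetric]] by simp
    moreover have "det G * det F = 1" using GF(1) by (metis det_I det_mul)
    ultimately show "det (Af x) = 1" unfolding Af_def by (simp add: det_mul)
    show "\<forall>v\<in>V. Af x *v v = (x^?n/x^m) *s v"
    proof
      fix v assume v: "v \<in> V"
      have "D x *v (F *v v) = (x^?n/x^m) *s (F *v v)"
        unfolding D_def \<delta>_def by (rule diag_mult_vec) (use GF(4) v in auto)
      then have "Af x *v v = G *v ((x^?n/x^m) *s (F *v v))"
        unfolding Af_def by (simp add: matrix_vector_mul_assoc[symmetric])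
      also have "\<dots> = (x^?n/x^m) *s (G *v (F *v v))" by (simp add: vec.scale)
      also have "G *v (F *v v) = v" using GF(1) by (simp add: matrix_vector_mul_assoc)
      finally show "Af x *v v = (x^?n/x^m) *s v" .
    qed
    assume x1: "norm x \<le> 1"
    fix i j
    show "norm (Af x $i$j) \<le> K / norm x ^ m"
    proof -
      have d: "norm (\<delta> x a) \<le> 1 / norm x ^ m" for a
      proof -
        have "norm x ^ ?n \<le> 1" using x1 by (simp add: power_le_one)
        then show ?thesis unfolding \<delta>_def using x
          by (auto simp: norm_divide norm_power divide_right_mono)
      qed
      have "Af x $i$j = (\<Sum>a\<in>UNIV. G$i$a * \<delta> x a * F$a$j)"
        unfolding Af_def D_def by (rule diag_entry)
      then have "norm (Af x $i$j) \<le> (\<Sum>a\<in>UNIV. norm (G$i$a) * norm (\<delta> x a) * norm (F$a$j))"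
        by (metis (no_types, lifting) norm_mult norm_sum sum.cong)
      also have "\<dots> \<le> (\<Sum>a\<in>UNIV. norm (G$i$a) * (1 / norm x ^ m) * norm (F$a$j))"
        by (intro sum_mono mult_right_mono mult_left_mono d) auto
      also have "\<dots> = (\<Sum>a\<in>UNIV. norm (G$i$a) * norm (F$a$j)) / norm x ^ m"
        by (simp add: sum_divide_distrib)
      also have "\<dots> \<le> K / norm x ^ m"
      proof (rule divide_right_mono)
        have "(\<Sum>a\<in>UNIV. norm (G$i$a) * norm (F$a$j)) \<le> (\<Sum>j\<in>UNIV. \<Sum>a\<in>UNIV. norm (G$i$a) * norm (F$a$j))"
          by (rule member_le_sum[where f="\<lambda>j. \<Sum>a\<in>UNIV. norm (G$i$a) * norm (F$a$j)"]) (auto intro!: sum_nonneg)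
        also have "\<dots> \<le> K" unfolding K_def
          by (rule member_le_sum[where f="\<lambda>i. \<Sum>j\<in>UNIV. \<Sum>a\<in>UNIV. norm (G$i$a) * norm (F$a$j)"]) (auto intro!: sum_nonneg)
        finally show "(\<Sum>a\<in>UNIV. norm (G$i$a) * norm (F$a$j)) \<le> K" .
      qed simp
      finally show "norm (Af x $i$j) \<le> K / norm x ^ m" .
    qed
  qed
  then show ?thesis using K0 GF(3) unfolding m_def by blast
qed


lemma prod_list_tendsto0:
  fixes f :: "'b \<Rightarrow> 'c \<Rightarrow> complex"
  assumes "\<forall>p\<in>set xs. ((\<lambda>x. f x p) \<longlongrightarrow> 0) F" "xs \<noteq> []"
  shows "((\<lambda>x. prod_list (map (f x) xs)) \<longlongrightarrow> 0) F"
  using assms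
proof (induction xs)
  case Nil then show ?case by simp
next
  case (Cons a ys)
  show ?case
  proof (cases "ys = []")
    case True
    then show ?thesis using Cons.prems by simp
  next
    case False
    have "((\<lambda>x. f x a * prod_list (map (f x) ys)) \<longlongrightarrow> 0 * 0) F"
      by (rule tendsto_mult) (use Cons False in auto)
    then show ?thesis by simp
  qed
qed

lemma nullcone_crit:
  fixes T :: "('n::finite) tensor3"
  assumes dets: "\<forall>x. x \<noteq> 0 \<longrightarrow> det (Af x) = 1 \<and> det (Bf x) = 1 \<and> det (Cf x) = 1"
    and lim: "\<forall>i j k. ((\<lambda>x. tensor_act (Af x) (Bf x) (Cf x) T i j k) \<longlongrightarrow> 0) (at (0::complex))"
  shows "in_nullcone T"
  unfolding in_nullcone_def
proof (intro allI impI, elim conjE)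
  fix d and P :: "'n tensor3 \<Rightarrow> complex"
  assume d: "0 < d" and hom: "homogeneous_poly_fun d P" and inv: "SL3_invariant P"
  obtain c where c: "\<forall>T. P T = (\<Sum>xs\<in>{xs. length xs = d}.
                      c xs * (\<Prod>p\<leftarrow>xs. T (fst p) (fst (snd p)) (snd (snd p))))"
    using hom unfolding homogeneous_poly_fun_def by blast
  define X where "X x = tensor_act (Af x) (Bf x) (Cf x) T" for x
  have fin: "finite {xs :: ('n \<times> 'n \<times> 'n) list. length xs = d}"
    using finite_lists_length_eq[of "UNIV :: ('n \<times> 'n \<times> 'n) set" d] by simp
  have "((\<lambda>x. P (X x)) \<longlongrightarrow> (\<Sum>xs\<in>{xs. length xs = d}. c xs * 0)) (at 0)"
    unfolding c[rule_format]
  proof (rule tendsto_sum, rule tendsto_mult[OF tendsto_const])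
    fix xs :: "('n \<times> 'n \<times> 'n) list" assume "xs \<in> {xs. length xs = d}"
    then have "xs \<noteq> []" using d by auto
    then show "((\<lambda>x. \<Prod>p\<leftarrow>xs. X x (fst p) (fst (snd p)) (snd (snd p))) \<longlongrightarrow> 0) (at 0)"
      using prod_list_tendsto0[of xs "\<lambda>x p. X x (fst p) (fst (snd p)) (snd (snd p))"] lim
      unfolding X_def by auto
  qed
  then have l1: "((\<lambda>x. P (X x)) \<longlongrightarrow> 0) (at 0)" by simp
  have "\<forall>\<^sub>F x in at (0::complex). P (X x) = P T"
    unfolding eventually_at_filter
  proof (intro always_eventually allI impI)
    fix x :: complex assume "x \<noteq> 0"
    then show "P (X x) = P T" using dets inv unfolding SL3_invariant_def X_def by blast
  qed
  then have "((\<lambda>x. P T) \<longlongrightarrow> 0) (at (0::complex))"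
    by (rule Lim_transform_eventually[OF l1])
  then show "P T = 0" by (simp add: tendsto_const_iff)
qed


lemma swap3:
  fixes g :: "'s \<Rightarrow> 'a \<Rightarrow> 'b \<Rightarrow> 'c \<Rightarrow> 'r::comm_monoid_add"
  shows "(\<Sum>s\<in>R. \<Sum>a\<in>A. \<Sum>b\<in>B. \<Sum>c\<in>C. g s a b c) = (\<Sum>a\<in>A. \<Sum>b\<in>B. \<Sum>c\<in>C. \<Sum>s\<in>R. g s a b c)"
proof -
  have "(\<Sum>s\<in>R. \<Sum>a\<in>A. \<Sum>b\<in>B. \<Sum>c\<in>C. g s a b c) = (\<Sum>a\<in>A. \<Sum>s\<in>R. \<Sum>b\<in>B. \<Sum>c\<in>C. g s a b c)"
    by (rule sum.swap)
  also have "\<dots> = (\<Sum>a\<in>A. \<Sum>b\<in>B. \<Sum>s\<in>R. \<Sum>c\<in>C. g s a b c)"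
    by (intro sum.cong refl sum.swap)
  also have "\<dots> = (\<Sum>a\<in>A. \<Sum>b\<in>B. \<Sum>c\<in>C. \<Sum>s\<in>R. g s a b c)"
    by (intro sum.cong refl sum.swap)
  finally show ?thesis .
qed

lemma tensor_act_sum:
  "tensor_act A B C (\<lambda>i j k. \<Sum>s\<in>R. f s i j k) i j k = (\<Sum>s\<in>R. tensor_act A B C (f s) i j k)"
  unfolding tensor_act_def sum_distrib_left
  by (rule swap3[symmetric])


lemma prod_sums3:
  fixes x :: "'a \<Rightarrow> 'r::comm_semiring_0"
  shows "(\<Sum>a\<in>A. x a) * (\<Sum>b\<in>B. \<Sum>c\<in>C. y b c) = (\<Sum>a\<in>A. \<Sum>b\<in>B. \<Sum>c\<in>C. x a * y b c)"
  by (simp only: sum_distrib_right) (simp only: sum_distrib_left)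

lemma rot3:
  "(\<Sum>c\<in>C. \<Sum>a\<in>A. \<Sum>b\<in>B. g a b c) = (\<Sum>a\<in>A. \<Sum>b\<in>B. \<Sum>c\<in>C. g a b c)"
proof -
  have "(\<Sum>c\<in>C. \<Sum>a\<in>A. \<Sum>b\<in>B. g a b c) = (\<Sum>a\<in>A. \<Sum>c\<in>C. \<Sum>b\<in>B. g a b c)"
    by (rule sum.swap)
  also have "\<dots> = (\<Sum>a\<in>A. \<Sum>b\<in>B. \<Sum>c\<in>C. g a b c)"
    by (intro sum.cong refl sum.swap)
  finally show ?thesis .
qed

lemma act_slice1:
  "tensor_act A B C (slice_tensor Slice1 u M) i j k =
     (A *v vec_lambda u)$i * (\<Sum>b\<in>UNIV. \<Sum>c\<in>UNIV. B$j$b * C$k$c * M b c)"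
  unfolding tensor_act_def matrix_vector_mult_def vec_lambda_beta prod_sums3
  by (intro sum.cong refl) (simp add: mult_ac)

lemma act_slice2:
  "tensor_act A B C (slice_tensor Slice2 u M) i j k =
     (B *v vec_lambda u)$j * (\<Sum>a\<in>UNIV. \<Sum>c\<in>UNIV. A$i$a * C$k$c * M a c)"
proof -
  have "(B *v vec_lambda u)$j * (\<Sum>a\<in>UNIV. \<Sum>c\<in>UNIV. A$i$a * C$k$c * M a c)
     = (\<Sum>b\<in>UNIV. \<Sum>a\<in>UNIV. \<Sum>c\<in>UNIV. (B$j$b * u b) * (A$i$a * C$k$c * M a c))"
    unfolding matrix_vector_mult_def vec_lambda_beta prod_sums3 ..
  also have "\<dots> = (\<Sum>a\<in>UNIV. \<Sum>b\<in>UNIV. \<Sum>c\<in>UNIV. (B$j$b * u b) * (A$i$a * C$k$c * M a c))"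
    by (rule sum.swap)
  also have "\<dots> = tensor_act A B C (slice_tensor Slice2 u M) i j k"
    unfolding tensor_act_def by (intro sum.cong refl) (simp add: mult_ac)
  finally show ?thesis ..
qed

lemma act_slice3:
  "tensor_act A B C (slice_tensor Slice3 u M) i j k =
     (C *v vec_lambda u)$k * (\<Sum>a\<in>UNIV. \<Sum>b\<in>UNIV. A$i$a * B$j$b * M a b)"
proof -
  have "(C *v vec_lambda u)$k * (\<Sum>a\<in>UNIV. \<Sum>b\<in>UNIV. A$i$a * B$j$b * M a b)
     = (\<Sum>c\<in>UNIV. \<Sum>a\<in>UNIV. \<Sum>b\<in>UNIV. (C$k$c * u c) * (A$i$a * B$j$b * M a b))"
    unfolding matrix_vector_mult_def vec_lambda_beta prod_sums3 ..
  also have "\<dots> = (\<Sum>a\<in>UNIV. \<Sum>b\<in>UNIV. \<Sum>c\<in>UNIV. (C$k$c * u c) * (A$i$a * B$j$b * M a b))"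
    by (rule rot3)
  also have "\<dots> = tensor_act A B C (slice_tensor Slice3 u M) i j k"
    unfolding tensor_act_def by (intro sum.cong refl) (simp add: mult_ac)
  finally show ?thesis ..
qed


lemma double_sum_bound:
  fixes P Q :: "'n::finite \<Rightarrow> complex"
  assumes P: "\<forall>b. norm (P b) \<le> \<beta>" and Q: "\<forall>c. norm (Q c) \<le> \<gamma>"
  shows "norm (\<Sum>b\<in>UNIV. \<Sum>c\<in>UNIV. P b * Q c * M b c) \<le> \<beta> * \<gamma> * (\<Sum>b\<in>UNIV. \<Sum>c\<in>UNIV. norm (M b c))"
proof -
  have b0: "0 \<le> \<beta>" using P norm_ge_zero order_trans by blast
  have "norm (\<Sum>b\<in>UNIV. \<Sum>c\<in>UNIV. P b * Q c * M b c) \<le> (\<Sum>b\<in>UNIV. \<Sum>c\<in>UNIV. norm (P b * Q c * M b c))"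
    by (rule order_trans[OF norm_sum sum_mono[OF norm_sum]])
  also have "\<dots> \<le> (\<Sum>b\<in>UNIV. \<Sum>c\<in>UNIV. \<beta> * \<gamma> * norm (M b c))"
    unfolding norm_mult
    by (intro sum_mono mult_right_mono mult_mono) (use P Q b0 in auto)
  also have "\<dots> = \<beta> * \<gamma> * (\<Sum>b\<in>UNIV. \<Sum>c\<in>UNIV. norm (M b c))"
    by (simp add: sum_distrib_left)
  finally show ?thesis .
qed

lemma power_ratio_le:
  fixes t :: real
  assumes "0 < t" "t \<le> 1" "m < n"
  shows "t^n / t^m \<le> t"
proof -
  have "t^n = t^m * t^(n-m)" using assms(3) by (simp add: power_add[symmetric])
  then have "t^n / t^m = t^(n-m)" using assms(1) by simp
  also have "\<dots> \<le> t^1" using assms by (intro power_decreasing) auto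
  finally show ?thesis by simp
qed

lemma term_bound:
  fixes x alpha :: complex and P Q :: "'n::finite \<Rightarrow> complex"
  assumes x: "x \<noteq> 0" "norm x \<le> 1" and mn: "m1 + m2 + m3 < n"
    and P: "\<forall>b. norm (P b) \<le> KB / norm x ^ m2" and Q: "\<forall>c. norm (Q c) \<le> KC / norm x ^ m3"
    and K: "0 \<le> KB" "0 \<le> KC"
  shows "norm ((x^n/x^m1) * alpha * (\<Sum>b\<in>UNIV. \<Sum>c\<in>UNIV. P b * Q c * M b c))
           \<le> (norm alpha * KB * KC * (\<Sum>b\<in>UNIV. \<Sum>c\<in>UNIV. norm (M b c))) * norm x"
proof -
  define t where "t = norm x"
  have t: "0 < t" "t \<le> 1" using x unfolding t_def by auto
  define S where "S = (\<Sum>b\<in>UNIV. \<Sum>c\<in>UNIV. norm (M b c))"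
  have S: "0 \<le> S" unfolding S_def by (intro sum_nonneg) auto
  have W: "norm (\<Sum>b\<in>UNIV. \<Sum>c\<in>UNIV. P b * Q c * M b c) \<le> (KB / t^m2) * (KC / t^m3) * S"
    unfolding S_def t_def by (rule double_sum_bound[OF P Q])
  have "norm ((x^n/x^m1) * alpha * (\<Sum>b\<in>UNIV. \<Sum>c\<in>UNIV. P b * Q c * M b c))
      = (t^n/t^m1) * norm alpha * norm (\<Sum>b\<in>UNIV. \<Sum>c\<in>UNIV. P b * Q c * M b c)"
    unfolding t_def by (simp add: norm_mult norm_divide norm_power)
  also have "\<dots> \<le> (t^n/t^m1) * norm alpha * ((KB / t^m2) * (KC / t^m3) * S)"
    using W t by (intro mult_left_mono) auto
  also have "\<dots> = (norm alpha * KB * KC * S) * (t^n / t^(m1+m2+m3))"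
    by (simp add: power_add field_simps)
  also have "\<dots> \<le> (norm alpha * KB * KC * S) * t"
    using power_ratio_le[OF t mn] K S by (intro mult_left_mono) auto
  finally show ?thesis unfolding t_def S_def .
qed


lemma decomp_exists: "has_slice_decomp (T::('n::finite) tensor3) CARD('n)"
proof -
  obtain h :: "nat \<Rightarrow> 'n" where h: "bij_betw h {0..<CARD('n)} UNIV"
    using ex_bij_betw_nat_finite[of "UNIV :: 'n set"] by auto
  have "T = (\<lambda>i j k. \<Sum>s<CARD('n). slice_tensor Slice1 (\<lambda>a. if a = h s then 1 else 0) (T (h s)) i j k)"
  proof (intro ext)
    fix i j k
    have "(\<Sum>s<CARD('n). slice_tensor Slice1 (\<lambda>a. if a = h s then 1 else 0) (T (h s)) i j k)
        = (\<Sum>s\<in>{0..<CARD('n)}. (\<lambda>a. (if i = a then 1 else 0) * T a j k) (h s))"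
      by (simp add: lessThan_atLeast0)
    also have "\<dots> = (\<Sum>a\<in>UNIV. (if i = a then 1 else 0) * T a j k)"
      by (rule sum.reindex_bij_betw[OF h])
    also have "\<dots> = T i j k" using sum_if_eq2[of i 1 "\<lambda>a. T a j k"] by simp
    finally show "T i j k = (\<Sum>s<CARD('n). slice_tensor Slice1 (\<lambda>a. if a = h s then 1 else 0) (T (h s)) i j k)" ..
  qed
  then show ?thesis unfolding has_slice_decomp_def
    by (intro exI[of _ "\<lambda>_. Slice1"] exI[of _ "\<lambda>s a. if a = h s then 1 else 0"] exI[of _ "\<lambda>s. T (h s)"])
qed


theorem lemma4:
  fixes T :: "('n::finite) tensor3"
  assumes "slice_rank T < CARD('n)"
  shows "in_nullcone T"
proof -
  let ?n = "CARD('n)"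
  have "has_slice_decomp T (slice_rank T)"
    unfolding slice_rank_def by (rule LeastI[of "\<lambda>r. has_slice_decomp T r", OF decomp_exists])
  then obtain dir u M where T: "T = (\<lambda>i j k. \<Sum>s<slice_rank T. slice_tensor (dir s) (u s) (M s) i j k)"
    unfolding has_slice_decomp_def by blast
  define r where "r = slice_rank T"
  have r: "r < ?n" using assms unfolding r_def .
  define R1 where "R1 = {s. s < r \<and> dir s = Slice1}"
  define R2 where "R2 = {s. s < r \<and> dir s = Slice2}"
  define R3 where "R3 = {s. s < r \<and> dir s = Slice3}"
  have fR: "finite R1" "finite R2" "finite R3" unfolding R1_def R2_def R3_def by auto
  have "{..<r} = R1 \<union> (R2 \<union> R3)" unfolding R1_def R2_def R3_def
    using slice_dir.exhaust by auto
  moreover have "R2 \<inter> R3 = {}" "R1 \<inter> (R2 \<union> R3) = {}" unfolding R1_def R2_def R3_def by auto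
  ultimately have cardR: "card R1 + card R2 + card R3 = r"
    using fR by (metis add.assoc card_Un_disjoint card_lessThan finite_UnI)
  define vv where "vv s = vec_lambda (u s)" for s
  obtain m1 K1 and Af :: "complex \<Rightarrow> complex^'n^'n" where A: "m1 \<le> card (vv ` R1)" "0 \<le> K1"
     "\<forall>x. x \<noteq> 0 \<longrightarrow> det (Af x) = 1 \<and> (\<forall>v\<in>vv ` R1. Af x *v v = (x^?n/x^m1) *s v) \<and>
        (norm x \<le> 1 \<longrightarrow> (\<forall>i j. norm (Af x $i$j) \<le> K1 / norm x ^ m1))"
    using factor_family[of "vv ` R1"] fR by blast
  obtain m2 K2 and Bf :: "complex \<Rightarrow> complex^'n^'n" where B: "m2 \<le> card (vv ` R2)" "0 \<le> K2"
     "\<forall>x. x \<noteq> 0 \<longrightarrow> det (Bf x) = 1 \<and> (\<forall>v\<in>vv ` R2. Bf x *v v = (x^?n/x^m2) *s v) \<and>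
        (norm x \<le> 1 \<longrightarrow> (\<forall>i j. norm (Bf x $i$j) \<le> K2 / norm x ^ m2))"
    using factor_family[of "vv ` R2"] fR by blast
  obtain m3 K3 and Cf :: "complex \<Rightarrow> complex^'n^'n" where C: "m3 \<le> card (vv ` R3)" "0 \<le> K3"
     "\<forall>x. x \<noteq> 0 \<longrightarrow> det (Cf x) = 1 \<and> (\<forall>v\<in>vv ` R3. Cf x *v v = (x^?n/x^m3) *s v) \<and>
        (norm x \<le> 1 \<longrightarrow> (\<forall>i j. norm (Cf x $i$j) \<le> K3 / norm x ^ m3))"
    using factor_family[of "vv ` R3"] fR by blast
  have "card (vv ` R1) \<le> card R1" "card (vv ` R2) \<le> card R2" "card (vv ` R3) \<le> card R3"
    using fR card_image_le by blast+
  then have msum: "m1 + m2 + m3 < ?n" using A(1) B(1) C(1) cardR r by linarith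
  have lim: "\<forall>i j k. ((\<lambda>x. tensor_act (Af x) (Bf x) (Cf x) T i j k) \<longlongrightarrow> 0) (at (0::complex))"
  proof (intro allI)
    fix i j k
    let ?t = "\<lambda>s x. tensor_act (Af x) (Bf x) (Cf x) (slice_tensor (dir s) (u s) (M s)) i j k"
    have X: "tensor_act (Af x) (Bf x) (Cf x) T i j k = (\<Sum>s<r. ?t s x)" for x
      unfolding r_def by (subst T) (rule tensor_act_sum)
    have "\<forall>s\<in>{..<r}. \<exists>c. \<forall>x. x \<noteq> 0 \<and> norm x \<le> 1 \<longrightarrow> norm (?t s x) \<le> c * norm x"
    proof
      fix s assume s: "s \<in> {..<r}"
      show "\<exists>c. \<forall>x. x \<noteq> 0 \<and> norm x \<le> 1 \<longrightarrow> norm (?t s x) \<le> c * norm x"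
      proof (cases "dir s")
        case Slice1
        then have sR: "vv s \<in> vv ` R1" using s unfolding R1_def by auto
        show ?thesis
        proof (intro exI allI impI, elim conjE)
          fix x :: complex assume x: "x \<noteq> 0" "norm x \<le> 1"
          have "?t s x = (x^?n/x^m1) * u s i * (\<Sum>b\<in>UNIV. \<Sum>c\<in>UNIV. Bf x$j$b * Cf x$k$c * M s b c)"
          proof -
            have e: "Af x *v vv s = (x^?n/x^m1) *s vv s" using A(3) x sR by blast
            have "?t s x = (Af x *v vv s)$i * (\<Sum>b\<in>UNIV. \<Sum>c\<in>UNIV. Bf x$j$b * Cf x$k$c * M s b c)" by (simp only: Slice1 act_slice1 vv_def)
            also have "\<dots> = (x^?n/x^m1) * u s i * (\<Sum>b\<in>UNIV. \<Sum>c\<in>UNIV. Bf x$j$b * Cf x$k$c * M s b c)" unfolding e by (simp add: vv_def)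
            finally show ?thesis .
          qed
          also have "norm \<dots> \<le> (norm (u s i) * K2 * K3 * (\<Sum>b\<in>UNIV. \<Sum>c\<in>UNIV. norm (M s b c))) * norm x"
            by (rule term_bound) (use x msum B(2,3) C(2,3) in auto)
          finally show "norm (?t s x) \<le> (norm (u s i) * K2 * K3 * (\<Sum>b\<in>UNIV. \<Sum>c\<in>UNIV. norm (M s b c))) * norm x" .
        qed
      next
        case Slice2
        then have sR: "vv s \<in> vv ` R2" using s unfolding R2_def by auto
        show ?thesis
        proof (intro exI allI impI, elim conjE)
          fix x :: complex assume x: "x \<noteq> 0" "norm x \<le> 1"
          have "?t s x = (x^?n/x^m2) * u s j * (\<Sum>a\<in>UNIV. \<Sum>c\<in>UNIV. Af x$i$a * Cf x$k$c * M s a c)"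
          proof -
            have e: "Bf x *v vv s = (x^?n/x^m2) *s vv s" using B(3) x sR by blast
            have "?t s x = (Bf x *v vv s)$j * (\<Sum>a\<in>UNIV. \<Sum>c\<in>UNIV. Af x$i$a * Cf x$k$c * M s a c)" by (simp only: Slice2 act_slice2 vv_def)
            also have "\<dots> = (x^?n/x^m2) * u s j * (\<Sum>a\<in>UNIV. \<Sum>c\<in>UNIV. Af x$i$a * Cf x$k$c * M s a c)" unfolding e by (simp add: vv_def)
            finally show ?thesis .
          qed
          also have "norm \<dots> \<le> (norm (u s j) * K1 * K3 * (\<Sum>b\<in>UNIV. \<Sum>c\<in>UNIV. norm (M s b c))) * norm x"
            by (rule term_bound[where ?m1.0=m2 and ?m2.0=m1 and ?m3.0=m3]) (use x msum A(2,3) C(2,3) in auto)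
          finally show "norm (?t s x) \<le> (norm (u s j) * K1 * K3 * (\<Sum>b\<in>UNIV. \<Sum>c\<in>UNIV. norm (M s b c))) * norm x" .
        qed
      next
        case Slice3
        then have sR: "vv s \<in> vv ` R3" using s unfolding R3_def by auto
        show ?thesis
        proof (intro exI allI impI, elim conjE)
          fix x :: complex assume x: "x \<noteq> 0" "norm x \<le> 1"
          have "?t s x = (x^?n/x^m3) * u s k * (\<Sum>a\<in>UNIV. \<Sum>b\<in>UNIV. Af x$i$a * Bf x$j$b * M s a b)"
          proof -
            have e: "Cf x *v vv s = (x^?n/x^m3) *s vv s" using C(3) x sR by blast
            have "?t s x = (Cf x *v vv s)$k * (\<Sum>a\<in>UNIV. \<Sum>b\<in>UNIV. Af x$i$a * Bf x$j$b * M s a b)" by (simp only: Slice3 act_slice3 vv_def)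
            also have "\<dots> = (x^?n/x^m3) * u s k * (\<Sum>a\<in>UNIV. \<Sum>b\<in>UNIV. Af x$i$a * Bf x$j$b * M s a b)" unfolding e by (simp add: vv_def)
            finally show ?thesis .
          qed
          also have "norm \<dots> \<le> (norm (u s k) * K1 * K2 * (\<Sum>b\<in>UNIV. \<Sum>c\<in>UNIV. norm (M s b c))) * norm x"
            by (rule term_bound[where ?m1.0=m3 and ?m2.0=m1 and ?m3.0=m2]) (use x msum A(2,3) B(2,3) in auto)
          finally show "norm (?t s x) \<le> (norm (u s k) * K1 * K2 * (\<Sum>b\<in>UNIV. \<Sum>c\<in>UNIV. norm (M s b c))) * norm x" .
        qed
      qed
    qed
    then obtain c where c: "\<forall>s\<in>{..<r}. \<forall>x. x \<noteq> 0 \<and> norm x \<le> 1 \<longrightarrow> norm (?t s x) \<le> c s * norm x"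
      by (metis bchoice)
    have ev: "\<forall>\<^sub>F x in at (0::complex). norm (tensor_act (Af x) (Bf x) (Cf x) T i j k) \<le> (\<Sum>s<r. c s) * norm x"
      unfolding eventually_at
    proof (intro exI[of _ 1] conjI ballI impI allI)
      fix x :: complex assume "x \<noteq> 0 \<and> dist x 0 < 1"
      then have x: "x \<noteq> 0" "norm x \<le> 1" by auto
      have "norm (tensor_act (Af x) (Bf x) (Cf x) T i j k) \<le> (\<Sum>s<r. norm (?t s x))"
        unfolding X by (rule norm_sum)
      also have "\<dots> \<le> (\<Sum>s<r. c s * norm x)"
        by (rule sum_mono) (use c x in auto)
      also have "\<dots> = (\<Sum>s<r. c s) * norm x" by (simp add: sum_distrib_right)
      finally show "norm (tensor_act (Af x) (Bf x) (Cf x) T i j k) \<le> (\<Sum>s<r. c s) * norm x" .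
    qed simp
    have "((\<lambda>x::complex. (\<Sum>s<r. c s) * norm x) \<longlongrightarrow> (\<Sum>s<r. c s) * norm (0::complex)) (at 0)"
      by (intro tendsto_intros)
    then have "((\<lambda>x::complex. (\<Sum>s<r. c s) * norm x) \<longlongrightarrow> 0) (at 0)" by simp
    then show "((\<lambda>x. tensor_act (Af x) (Bf x) (Cf x) T i j k) \<longlongrightarrow> 0) (at (0::complex))"
      using ev by (rule Lim_null_comparison[rotated])
  qed
  show ?thesis
    by (rule nullcone_crit[OF _ lim]) (use A(3) B(3) C(3) in blast)
qed

end
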